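(* Let $\mathcal X=\{1,\dots,J\}$, $\mathcal Y=\{1,\dots,K\}$, and let $\mathcal C_n\subset\mathcal X^n$ be a codebook of $M$ codewords, all of type $p_X$, used over a DMC $P_{\hat Y|X}$. Let $p_{\hat Y|X_1}$ be a conditional type such that $M\,|\mathcal T_{\mathbf x}(p_{\hat Y|X_1})|\ge 2|\mathcal T(p_{\hat Y})|$ for $\mathbf x$ of type $p_X$, where $p_{\hat Y}$ is the $\hat Y$-marginal of $p_X\times p_{\hat Y|X_1}$. Then there exist a codeword $\mathbf x_1\in\mathcal C_n$ and a joint type $p_{\hat YX_1X_2}$ on $\mathcal Y\times\mathcal X\times\mathcal X$ with $p_{\hat YX_1}=p_{\hat YX_2}$ such that $$\Pr\big[\exists\mathbf x_2\in\mathcal C_n\setminus\{\mathbf x_1\}:\ \hat p_{\hat{\mathbf y}\mathbf x_1\mathbf x_2}=p_{\hat YX_1X_2}\big]\ \ge\ \frac{1}{2(n+1)^{J^2K-1}}\Pr\big[\hat{\mathbf y}\in\mathcal T_{\mathbf x_1}(p_{\hat Y|X_1})\big],$$ where both probabilities are with respect to $\hat{\mathbf y}\sim P_{\hat Y|X}^n(\cdot|\mathbf x_1)$.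
   Context: The type of a sequence is its empirical distribution; $\hat p_{\hat{\mathbf y}\mathbf x_1\mathbf x_2}(k,j_1,j_2)=\frac1n|\{i:\hat y_i=k,x_{1,i}=j_1,x_{2,i}=j_2\}|$. The conditional type $\hat p_{\mathbf y|\mathbf x}(k|j)$ is $\hat p_{\mathbf x\mathbf y}(j,k)/\hat p_{\mathbf x}(j)$ if $\hat p_{\mathbf x}(j)>0$ and $1/K$ otherwise; $\mathcal T_{\mathbf x}(p_{\hat Y|X})=\{\hat{\mathbf y}:\hat p_{\hat{\mathbf y}|\mathbf x}=p_{\hat Y|X}\}$ and $\mathcal T(p_{\hat Y})$ is the set of sequences of type $p_{\hat Y}$. $P^n_{\hat Y|X}(\hat{\mathbf y}|\mathbf x)=\prod_i P_{\hat Y|X}(\hat y_i|x_i)$. *)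

theory Defs
  imports Complex_Main
begin

definition seqs :: "nat \<Rightarrow> nat set \<Rightarrow> nat list set" where
  "seqs n A = {xs. length xs = n \<and> set xs \<subseteq> A}"

definition type1 :: "nat list \<Rightarrow> nat \<Rightarrow> real" where
  "type1 x j = real (card {i. i < length x \<and> x ! i = j}) / real (length x)"

definition type2 :: "nat list \<Rightarrow> nat list \<Rightarrow> nat \<Rightarrow> nat \<Rightarrow> real" where
  "type2 x y j k = real (card {i. i < length x \<and> x ! i = j \<and> y ! i = k}) / real (length x)"

definition type3 :: "nat list \<Rightarrow> nat list \<Rightarrow> nat list \<Rightarrow> nat \<Rightarrow> nat \<Rightarrow> nat \<Rightarrow> real" where
  "type3 y x1 x2 k j1 j2 =
     real (card {i. i < length y \<and> y ! i = k \<and> x1 ! i = j1 \<and> x2 ! i = j2}) / real (length y)"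

text \<open>Conditional type of y given x: p(k|j), with the convention 1/K for unseen j.\<close>
definition condtype :: "nat \<Rightarrow> nat list \<Rightarrow> nat list \<Rightarrow> nat \<Rightarrow> nat \<Rightarrow> real" where
  "condtype K y x k j = (if type1 x j > 0 then type2 x y j k / type1 x j else 1 / real K)"

definition cond_typeclass_of :: "nat \<Rightarrow> nat \<Rightarrow> nat list \<Rightarrow> (nat \<Rightarrow> nat \<Rightarrow> real) \<Rightarrow> nat list set" where
  "cond_typeclass_of J K x p =
     {y \<in> seqs (length x) {1..K}. \<forall>k\<in>{1..K}. \<forall>j\<in>{1..J}. condtype K y x k j = p k j}"

definition typeclass_of :: "nat \<Rightarrow> nat \<Rightarrow> (nat \<Rightarrow> real) \<Rightarrow> nat list set" where
  "typeclass_of n K q = {y \<in> seqs n {1..K}. \<forall>k\<in>{1..K}. type1 y k = q k}"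

definition is_cond_type :: "nat \<Rightarrow> nat \<Rightarrow> nat \<Rightarrow> (nat \<Rightarrow> nat \<Rightarrow> real) \<Rightarrow> bool" where
  "is_cond_type n J K p \<longleftrightarrow>
     (\<exists>x\<in>seqs n {1..J}. \<exists>y\<in>seqs n {1..K}. \<forall>k\<in>{1..K}. \<forall>j\<in>{1..J}. condtype K y x k j = p k j)"

definition is_joint_type :: "nat \<Rightarrow> nat \<Rightarrow> nat \<Rightarrow> (nat \<Rightarrow> nat \<Rightarrow> nat \<Rightarrow> real) \<Rightarrow> bool" where
  "is_joint_type n J K p \<longleftrightarrow>
     (\<exists>y\<in>seqs n {1..K}. \<exists>x1\<in>seqs n {1..J}. \<exists>x2\<in>seqs n {1..J}.
        \<forall>k\<in>{1..K}. \<forall>j1\<in>{1..J}. \<forall>j2\<in>{1..J}. type3 y x1 x2 k j1 j2 = p k j1 j2)"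

text \<open>Memoryless channel probability P^n(y|x); W k j = P(k|j).\<close>
definition chan_prob :: "(nat \<Rightarrow> nat \<Rightarrow> real) \<Rightarrow> nat list \<Rightarrow> nat list \<Rightarrow> real" where
  "chan_prob W y x = (\<Prod>i<length x. W (y ! i) (x ! i))"

definition event_prob :: "nat \<Rightarrow> (nat \<Rightarrow> nat \<Rightarrow> real) \<Rightarrow> nat list \<Rightarrow> (nat list \<Rightarrow> bool) \<Rightarrow> real" where
  "event_prob K W x E = (\<Sum>y\<in>{y \<in> seqs (length x) {1..K}. E y}. chan_prob W y x)"

end

theory Submission
  imports Defs "HOL-Library.FuncSet"
begin

lemma finite_seqs: "finite A \<Longrightarrow> finite (seqs n A)"
  unfolding seqs_def using finite_lists_length_eq[of A n] by (simp add: conj_commute)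

lemma type1_nonneg: "type1 x j \<ge> 0" unfolding type1_def by simp

lemma type2_of_cond:
  assumes "length y = length x" "condtype K y x k j = q"
  shows "type2 x y j k = (if type1 x j > 0 then q * type1 x j else 0)"
proof (cases "type1 x j > 0")
  case True
  then show ?thesis using assms unfolding condtype_def by auto
next
  case False
  hence t0: "type1 x j = 0" using type1_nonneg[of x j] by linarith
  show ?thesis
  proof (cases "length x = 0")
    case True then show ?thesis using False unfolding type2_def by simp
  next
    case False
    hence "card {i. i < length x \<and> x ! i = j} = 0" using t0 unfolding type1_def by simp
    hence "{i. i < length x \<and> x ! i = j} = {}" by simp
    hence "{i. i < length x \<and> x ! i = j \<and> y ! i = k} = {}" by blast
    then show ?thesis using \<open>\<not> type1 x j > 0\<close> unfolding type2_def by simp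
  qed
qed

lemma chan_prob_group:
  assumes "x \<in> seqs n {1..J}" "y \<in> seqs n {1..K}"
  shows "chan_prob W y x = (\<Prod>v\<in>{1..J}\<times>{1..K}. W (snd v) (fst v) ^ card {i. i \<in> {..<n} \<and> (x!i, y!i) = v})"
proof -
  have lx: "length x = n" and sx: "set x \<subseteq> {1..J}" and ly: "length y = n" and sy: "set y \<subseteq> {1..K}"
    using assms unfolding seqs_def by auto
  have img: "(\<lambda>i. (x!i, y!i)) ` {..<n} \<subseteq> {1..J}\<times>{1..K}"
    using sx sy lx ly nth_mem by fastforce
  have "chan_prob W y x = (\<Prod>i\<in>{..<n}. W (y!i) (x!i))" unfolding chan_prob_def lx by simp
  also have "\<dots> = (\<Prod>v\<in>{1..J}\<times>{1..K}. \<Prod>i\<in>{i. i \<in> {..<n} \<and> (x!i, y!i) = v}. W (y!i) (x!i))"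
    by (rule prod.group[symmetric, OF _ _ img]) auto
  also have "\<dots> = (\<Prod>v\<in>{1..J}\<times>{1..K}. W (snd v) (fst v) ^ card {i. i \<in> {..<n} \<and> (x!i, y!i) = v})"
  proof (rule prod.cong[OF refl])
    fix v assume "v \<in> {1..J}\<times>{1..K}"
    have "(\<Prod>i\<in>{i. i \<in> {..<n} \<and> (x!i, y!i) = v}. W (y!i) (x!i)) = (\<Prod>i\<in>{i. i \<in> {..<n} \<and> (x!i, y!i) = v}. W (snd v) (fst v))"
      by (rule prod.cong) auto
    then show "(\<Prod>i\<in>{i. i \<in> {..<n} \<and> (x!i, y!i) = v}. W (y!i) (x!i)) = W (snd v) (fst v) ^ card {i. i \<in> {..<n} \<and> (x!i, y!i) = v}"
      by simp
  qed
  finally show ?thesis .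
qed

lemma chan_prob_const:
  assumes x: "x \<in> seqs n {1..J}" and y: "y \<in> cond_typeclass_of J K x V" and y': "y' \<in> cond_typeclass_of J K x V"
  shows "chan_prob W y x = chan_prob W y' x"
proof -
  have lx: "length x = n" using x unfolding seqs_def by auto
  have ys: "y \<in> seqs n {1..K}" "y' \<in> seqs n {1..K}" using y y' lx unfolding cond_typeclass_of_def by auto
  have ly: "length y = n" "length y' = n" using ys unfolding seqs_def by auto
  have "card {i. i \<in> {..<n} \<and> (x!i, y!i) = v} = card {i. i \<in> {..<n} \<and> (x!i, y'!i) = v}"
    if v: "v \<in> {1..J}\<times>{1..K}" for v
  proof -
    obtain j k where vjk: "v = (j,k)" "j \<in> {1..J}" "k \<in> {1..K}" using v by auto
    have c1: "condtype K y x k j = V k j" using y vjk unfolding cond_typeclass_of_def by auto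
    have c2: "condtype K y' x k j = V k j" using y' vjk unfolding cond_typeclass_of_def by auto
    have "type2 x y j k = type2 x y' j k"
      using type2_of_cond[OF _ c1] type2_of_cond[OF _ c2] ly lx by simp
    hence "card {i. i < length x \<and> x ! i = j \<and> y ! i = k} = card {i. i < length x \<and> x ! i = j \<and> y' ! i = k}"
      unfolding type2_def using lx
      by (cases "n = 0") (auto simp: divide_cancel_right)
    moreover have "{i. i \<in> {..<n} \<and> (x!i, y!i) = v} = {i. i < length x \<and> x ! i = j \<and> y ! i = k}"
      "{i. i \<in> {..<n} \<and> (x!i, y'!i) = v} = {i. i < length x \<and> x ! i = j \<and> y' ! i = k}"
      using vjk lx by auto
    ultimately show ?thesis by simp
  qed
  then show ?thesis using chan_prob_group[OF x ys(1)] chan_prob_group[OF x ys(2)]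
    by (metis (no_types, lifting) prod.cong)
qed


lemma card_split:
  assumes "finite S" "(\<lambda>i. g i) ` S \<subseteq> T" "finite T"
  shows "(\<Sum>v\<in>T. card {i\<in>S. g i = v}) = card S"
  using sum.group[OF assms(1) assms(3) assms(2), of "\<lambda>_. (1::nat)"] by simp

lemma marg1:
  assumes x1: "x1 \<in> seqs n {1..J}" and x2: "x2 \<in> seqs n {1..J}" and y: "length y = n"
  shows "(\<Sum>j2=1..J. type3 y x1 x2 k j j2) = type2 x1 y j k"
proof -
  let ?S = "{i. i < n \<and> y ! i = k \<and> x1 ! i = j}"
  have l: "length x1 = n" "length x2 = n" "set x2 \<subseteq> {1..J}" using x1 x2 unfolding seqs_def by auto
  have "(\<lambda>i. x2 ! i) ` ?S \<subseteq> {1..J}"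
  proof (rule image_subsetI)
    fix i assume "i \<in> ?S" hence "i < length x2" using l by simp
    thus "x2 ! i \<in> {1..J}" using l nth_mem by blast
  qed
  hence "(\<Sum>v\<in>{1..J}. card {i\<in>?S. x2 ! i = v}) = card ?S" by (intro card_split) auto
  moreover have "\<And>v. {i\<in>?S. x2 ! i = v} = {i. i < length y \<and> y ! i = k \<and> x1 ! i = j \<and> x2 ! i = v}" using y by auto
  moreover have "?S = {i. i < length x1 \<and> x1 ! i = j \<and> y ! i = k}" using l by auto
  ultimately have E: "(\<Sum>v\<in>{1..J}. card {i. i < length y \<and> y ! i = k \<and> x1 ! i = j \<and> x2 ! i = v})
      = card {i. i < length x1 \<and> x1 ! i = j \<and> y ! i = k}"
    by simp
  have "(\<Sum>v\<in>{1..J}. real (card {i. i < length y \<and> y ! i = k \<and> x1 ! i = j \<and> x2 ! i = v}))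
      = real (card {i. i < length x1 \<and> x1 ! i = j \<and> y ! i = k})"
    using arg_cong[OF E, of real] by simp
  then show ?thesis unfolding type3_def type2_def using y l by (simp add: sum_divide_distrib[symmetric])
qed

lemma marg2:
  assumes x1: "x1 \<in> seqs n {1..J}" and x2: "x2 \<in> seqs n {1..J}" and y: "length y = n"
  shows "(\<Sum>j1=1..J. type3 y x1 x2 k j1 j) = type2 x2 y j k"
proof -
  let ?S = "{i. i < n \<and> y ! i = k \<and> x2 ! i = j}"
  have l: "length x1 = n" "length x2 = n" "set x1 \<subseteq> {1..J}" using x1 x2 unfolding seqs_def by auto
  have "(\<lambda>i. x1 ! i) ` ?S \<subseteq> {1..J}"
  proof (rule image_subsetI)
    fix i assume "i \<in> ?S" hence "i < length x1" using l by simp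
    thus "x1 ! i \<in> {1..J}" using l nth_mem by blast
  qed
  hence "(\<Sum>v\<in>{1..J}. card {i\<in>?S. x1 ! i = v}) = card ?S" by (intro card_split) auto
  moreover have "\<And>v. {i\<in>?S. x1 ! i = v} = {i. i < length y \<and> y ! i = k \<and> x1 ! i = v \<and> x2 ! i = j}" using y by auto
  moreover have "?S = {i. i < length x2 \<and> x2 ! i = j \<and> y ! i = k}" using l by auto
  ultimately have E: "(\<Sum>v\<in>{1..J}. card {i. i < length y \<and> y ! i = k \<and> x1 ! i = v \<and> x2 ! i = j})
      = card {i. i < length x2 \<and> x2 ! i = j \<and> y ! i = k}"
    by simp
  have "(\<Sum>v\<in>{1..J}. real (card {i. i < length y \<and> y ! i = k \<and> x1 ! i = v \<and> x2 ! i = j}))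
      = real (card {i. i < length x2 \<and> x2 ! i = j \<and> y ! i = k})"
    using arg_cong[OF E, of real] by simp
  then show ?thesis unfolding type3_def type2_def using y l by (simp add: sum_divide_distrib[symmetric])
qed

lemma marg_y:
  assumes x: "x \<in> seqs n {1..J}" and y: "length y = n"
  shows "type1 y k = (\<Sum>j=1..J. type2 x y j k)"
proof -
  let ?S = "{i. i < n \<and> y ! i = k}"
  have l: "length x = n" "set x \<subseteq> {1..J}" using x unfolding seqs_def by auto
  have "(\<lambda>i. x ! i) ` ?S \<subseteq> {1..J}"
  proof (rule image_subsetI)
    fix i assume "i \<in> ?S" hence "i < length x" using l by simp
    thus "x ! i \<in> {1..J}" using l nth_mem by blast
  qed
  hence "(\<Sum>v\<in>{1..J}. card {i\<in>?S. x ! i = v}) = card ?S" by (intro card_split) auto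
  moreover have "\<And>v. {i\<in>?S. x ! i = v} = {i. i < length x \<and> x ! i = v \<and> y ! i = k}" using l by auto
  moreover have "?S = {i. i < length y \<and> y ! i = k}" using y by auto
  ultimately have E: "(\<Sum>v\<in>{1..J}. card {i. i < length x \<and> x ! i = v \<and> y ! i = k})
      = card {i. i < length y \<and> y ! i = k}"
    by simp
  have "(\<Sum>v\<in>{1..J}. real (card {i. i < length x \<and> x ! i = v \<and> y ! i = k}))
      = real (card {i. i < length y \<and> y ! i = k})"
    using arg_cong[OF E, of real] by simp
  then show ?thesis unfolding type1_def type2_def using y l by (simp add: sum_divide_distrib[symmetric])
qed

lemma T_sub_TY:
  assumes x: "x \<in> seqs n {1..J}" and tx: "\<forall>j\<in>{1..J}. type1 x j = pX j"
    and y: "y \<in> cond_typeclass_of J K x V"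
  shows "y \<in> typeclass_of n K (\<lambda>k. \<Sum>j=1..J. pX j * V k j)"
proof -
  have lx: "length x = n" using x unfolding seqs_def by auto
  have ys: "y \<in> seqs n {1..K}" using y lx unfolding cond_typeclass_of_def by auto
  have ly: "length y = n" using ys unfolding seqs_def by auto
  have "type1 y k = (\<Sum>j=1..J. pX j * V k j)" if k: "k \<in> {1..K}" for k
  proof -
    have "type1 y k = (\<Sum>j=1..J. type2 x y j k)" by (rule marg_y[OF x ly])
    also have "\<dots> = (\<Sum>j=1..J. pX j * V k j)"
    proof (rule sum.cong[OF refl])
      fix j assume j: "j \<in> {1..J}"
      have c: "condtype K y x k j = V k j" using y j k unfolding cond_typeclass_of_def by auto
      show "type2 x y j k = pX j * V k j"
        using type2_of_cond[OF _ c] ly lx tx j type1_nonneg[of x j] by auto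
    qed
    finally show ?thesis .
  qed
  then show ?thesis using ys unfolding typeclass_of_def by auto
qed

lemma count_bound:
  fixes B :: "'a set" and n :: nat
  assumes fB: "finite B" and b0: "b0 \<in> B"
  shows "card {c :: 'a \<Rightarrow> nat. (\<forall>v. v \<notin> B \<longrightarrow> c v = 0) \<and> sum c B = n} \<le> (n+1)^(card B - 1)
     \<and> finite {c :: 'a \<Rightarrow> nat. (\<forall>v. v \<notin> B \<longrightarrow> c v = 0) \<and> sum c B = n}"
proof -
  let ?D = "{c :: 'a \<Rightarrow> nat. (\<forall>v. v \<notin> B \<longrightarrow> c v = 0) \<and> sum c B = n}"
  let ?E = "PiE (B - {b0}) (\<lambda>_. {0..n})"
  have inj: "inj_on (\<lambda>c. restrict c (B - {b0})) ?D"
  proof (rule inj_onI)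
    fix c c' assume c: "c \<in> ?D" and c': "c' \<in> ?D" and eq: "restrict c (B - {b0}) = restrict c' (B - {b0})"
    have agree: "c v = c' v" if "v \<in> B - {b0}" for v using eq that by (metis restrict_apply')
    have s1: "sum c B = c b0 + sum c (B - {b0})" using fB b0 by (simp add: sum.remove)
    have s2: "sum c' B = c' b0 + sum c' (B - {b0})" using fB b0 by (simp add: sum.remove)
    have "sum c (B - {b0}) = sum c' (B - {b0})" using agree by (rule sum.cong[OF refl])
    hence "c b0 = c' b0" using s1 s2 c c' by simp
    show "c = c'"
    proof
      fix v show "c v = c' v"
        using agree \<open>c b0 = c' b0\<close> c c' by (cases "v \<in> B"; cases "v = b0") auto
    qed
  qed
  have sub: "(\<lambda>c. restrict c (B - {b0})) ` ?D \<subseteq> ?E"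
  proof
    fix f assume "f \<in> (\<lambda>c. restrict c (B - {b0})) ` ?D"
    then obtain c where c: "c \<in> ?D" and f: "f = restrict c (B - {b0})" by auto
    have "c v \<le> n" if "v \<in> B" for v
      using c member_le_sum[of v B c] fB that by auto
    then show "f \<in> ?E" using f by auto
  qed
  have "card ?D = card ((\<lambda>c. restrict c (B - {b0})) ` ?D)" using card_image[OF inj] by simp
  also have "\<dots> \<le> card ?E" using sub by (intro card_mono) (auto intro!: finite_PiE simp: fB)
  also have "card ?E = (n+1)^(card B - 1)" using fB b0 by (simp add: card_PiE)
  finally have "card ?D \<le> (n+1)^(card B - 1)" .
  moreover have "finite ?D"
  proof -
    have "finite ?E" using fB by (intro finite_PiE) auto
    thus ?thesis using finite_imageD[OF finite_subset[OF sub] inj] by blast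
  qed
  ultimately show ?thesis by blast
qed

theorem lemma2:
  fixes n J K M :: nat
    and C :: "nat list set"
    and W :: "nat \<Rightarrow> nat \<Rightarrow> real"
    and pX :: "nat \<Rightarrow> real"
    and pYX1 :: "nat \<Rightarrow> nat \<Rightarrow> real"
  assumes J: "J \<ge> 1" and K: "K \<ge> 1"
    and W_nonneg: "\<forall>k\<in>{1..K}. \<forall>j\<in>{1..J}. W k j \<ge> 0"
    and W_sum: "\<forall>j\<in>{1..J}. (\<Sum>k=1..K. W k j) = 1"
    and C_sub: "C \<subseteq> seqs n {1..J}"
    and C_ne: "C \<noteq> {}"
    and C_card: "card C = M"
    and C_type: "\<forall>x\<in>C. \<forall>j\<in>{1..J}. type1 x j = pX j"
    and p_cond: "is_cond_type n J K pYX1"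
    and big: "\<forall>x\<in>seqs n {1..J}. (\<forall>j\<in>{1..J}. type1 x j = pX j) \<longrightarrow>
        real M * real (card (cond_typeclass_of J K x pYX1))
          \<ge> 2 * real (card (typeclass_of n K (\<lambda>k. \<Sum>j=1..J. pX j * pYX1 k j)))"
  shows "\<exists>x1\<in>C. \<exists>p :: nat \<Rightarrow> nat \<Rightarrow> nat \<Rightarrow> real.
           is_joint_type n J K p
         \<and> (\<forall>k\<in>{1..K}. \<forall>j\<in>{1..J}. (\<Sum>j2=1..J. p k j j2) = (\<Sum>j1=1..J. p k j1 j))
         \<and> event_prob K W x1
             (\<lambda>y. \<exists>x2\<in>C - {x1}. \<forall>k\<in>{1..K}. \<forall>j1\<in>{1..J}. \<forall>j2\<in>{1..J}.
                    type3 y x1 x2 k j1 j2 = p k j1 j2)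
           \<ge> 1 / (2 * real (n + 1) ^ (J^2 * K - 1))
              * event_prob K W x1 (\<lambda>y. y \<in> cond_typeclass_of J K x1 pYX1)"
proof -
  define T where "T x = cond_typeclass_of J K x pYX1" for x
  define TY where "TY = typeclass_of n K (\<lambda>k. \<Sum>j=1..J. pX j * pYX1 k j)"
  define cov where "cov x = {y \<in> T x. \<exists>x2\<in>C-{x}. y \<in> T x2}" for x
  have finC: "finite C" using C_sub finite_subset finite_seqs by blast
  have Mpos: "M > 0" using finC C_ne C_card by auto
  have finS: "finite (seqs n {1..K})" by (rule finite_seqs) simp
  have Cs: "x \<in> seqs n {1..J}" if "x \<in> C" for x using C_sub that by auto
  have Clen: "length x = n" if "x \<in> C" for x using Cs[OF that] unfolding seqs_def by auto
  have Tsub: "T x \<subseteq> seqs n {1..K}" if "x \<in> C" for x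
    using Clen[OF that] unfolding T_def cond_typeclass_of_def by auto
  have finT: "finite (T x)" if "x \<in> C" for x using finite_subset[OF Tsub[OF that] finS] .
  have TTY: "T x \<subseteq> TY" if "x \<in> C" for x
    using T_sub_TY[OF Cs[OF that]] C_type that unfolding T_def TY_def by blast
  have finTY: "finite TY" using finS unfolding TY_def typeclass_of_def by auto
  have covT: "cov x \<subseteq> T x" for x unfolding cov_def by auto
  have s1: "(\<Sum>x\<in>C. real (card (T x))) \<ge> 2 * real (card TY)"
  proof -
    have "(\<Sum>x\<in>C. real M * real (card (T x))) \<ge> (\<Sum>x\<in>C. 2 * real (card TY))"
      using big Cs C_type unfolding T_def TY_def by (intro sum_mono) auto
    hence "real M * (\<Sum>x\<in>C. real (card (T x))) \<ge> real M * (2 * real (card TY))"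
      using C_card by (simp add: sum_distrib_left)
    thus ?thesis using Mpos by simp
  qed
  have s2: "(\<Sum>x\<in>C. real (card (T x - cov x))) \<le> real (card TY)"
  proof -
    have "(\<Sum>x\<in>C. card (T x - cov x)) = card (\<Union>x\<in>C. T x - cov x)"
    proof (rule card_UN_disjoint[symmetric])
      show "finite C" by (rule finC)
      show "\<forall>i\<in>C. finite (T i - cov i)" using finT by blast
      show "\<forall>i\<in>C. \<forall>j\<in>C. i \<noteq> j \<longrightarrow> (T i - cov i) \<inter> (T j - cov j) = {}"
        unfolding cov_def by blast
    qed
    also have "\<dots> \<le> card TY" using TTY finTY by (intro card_mono) auto
    finally show ?thesis by (simp flip: of_nat_sum)
  qed
  have s3: "real (card (T x)) = real (card (T x - cov x)) + real (card (cov x))" if "x \<in> C" for x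
  proof -
    have "card (T x - cov x) = card (T x) - card (cov x)" using card_Diff_subset[OF finite_subset[OF covT finT[OF that]] covT] .
    moreover have "card (cov x) \<le> card (T x)" using covT finT[OF that] by (simp add: card_mono)
    ultimately show ?thesis by simp
  qed
  have "(\<Sum>x\<in>C. real (card (cov x)) - real (card (T x)) / 2) \<ge> 0"
  proof -
    have e: "(\<Sum>x\<in>C. real (card (T x))) = (\<Sum>x\<in>C. real (card (T x - cov x))) + (\<Sum>x\<in>C. real (card (cov x)))"
      by (subst sum.distrib[symmetric]) (rule sum.cong; simp add: s3)
    have "(\<Sum>x\<in>C. real (card (cov x)) - real (card (T x)) / 2)
        = (\<Sum>x\<in>C. real (card (cov x))) - (\<Sum>x\<in>C. real (card (T x))) / 2"
      by (simp add: sum_subtractf sum_divide_distrib)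
    thus ?thesis using s1 s2 e by linarith
  qed
  then obtain x1 where x1C: "x1 \<in> C" and x1big: "real (card (cov x1)) \<ge> real (card (T x1)) / 2"
  proof -
    assume r: "\<And>x1. x1 \<in> C \<Longrightarrow> real (card (T x1)) / 2 \<le> real (card (cov x1)) \<Longrightarrow> thesis"
    show thesis
    proof (rule ccontr)
      assume "\<not> thesis"
      hence "\<forall>x\<in>C. real (card (cov x)) - real (card (T x)) / 2 < 0" using r by force
      hence "(\<Sum>x\<in>C. real (card (cov x)) - real (card (T x)) / 2) < 0"
        using finC C_ne sum_strict_mono[of C "\<lambda>x. real (card (cov x)) - real (card (T x)) / 2" "\<lambda>_. 0"] by simp
      thus False using \<open>_ \<ge> 0\<close> by simp
    qed
  qed
  define f where "f y = chan_prob W y x1" for y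
  define b where "b = event_prob K W x1 (\<lambda>y. y \<in> cond_typeclass_of J K x1 pYX1)"
  define N where "N = (n + 1) ^ (J^2 * K - 1)"
  have x1s: "x1 \<in> seqs n {1..J}" using Cs[OF x1C] .
  have lx1: "length x1 = n" using Clen[OF x1C] .
  have fnn: "f y \<ge> 0" if "y \<in> seqs n {1..K}" for y
  proof -
    have "set y \<subseteq> {1..K}" "length y = n" "set x1 \<subseteq> {1..J}" using that x1s unfolding seqs_def by auto
    hence "\<forall>i<n. W (y!i) (x1!i) \<ge> 0" using W_nonneg lx1 nth_mem by (metis subsetD)
    thus ?thesis unfolding f_def chan_prob_def lx1 by (intro prod_nonneg) auto
  qed
  have b_eq: "b = sum f (T x1)"
  proof -
    have "{y \<in> seqs (length x1) {1..K}. y \<in> cond_typeclass_of J K x1 pYX1} = T x1"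
      using Tsub[OF x1C] lx1 unfolding T_def by auto
    thus ?thesis unfolding b_def event_prob_def f_def by simp
  qed
  have bnn: "b \<ge> 0" unfolding b_eq using Tsub[OF x1C] fnn by (intro sum_nonneg) auto
  have cov2: "2 * sum f (cov x1) \<ge> b"
  proof (cases "T x1 = {}")
    case True then show ?thesis using covT[of x1] b_eq by auto
  next
    case False
    then obtain y0 where y0: "y0 \<in> T x1" by auto
    have const: "f y = f y0" if "y \<in> T x1" for y
      unfolding f_def using chan_prob_const[OF x1s] that y0 unfolding T_def by blast
    have "sum f (T x1) = real (card (T x1)) * f y0" using const by simp
    moreover have "sum f (cov x1) = real (card (cov x1)) * f y0" using const covT[of x1] by (simp add: subset_iff)
    moreover have "f y0 \<ge> 0" using fnn Tsub[OF x1C] y0 by auto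
    moreover have "real (card (T x1)) * f y0 \<le> (2 * real (card (cov x1))) * f y0"
      by (rule mult_right_mono) (use x1big \<open>f y0 \<ge> 0\<close> in auto)
    ultimately show ?thesis using b_eq by simp
  qed
  have Npos: "real N \<ge> 1" unfolding N_def by simp
  have Nreal: "real (n + 1) ^ (J^2 * K - 1) = real N" unfolding N_def by simp
  show ?thesis
  proof (cases "cov x1 = {}")
    case True
    hence b0: "b = 0" using cov2 bnn by simp
    define y0 where "y0 = replicate n (1::nat)"
    have y0s: "y0 \<in> seqs n {1..K}" unfolding y0_def seqs_def using K by auto
    have ly0: "length y0 = n" unfolding y0_def by simp
    define p where "p = (\<lambda>k j1 j2. type3 y0 x1 x1 k j1 j2)"
    have "is_joint_type n J K p" unfolding is_joint_type_def p_def using y0s x1s by blast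
    moreover have "\<forall>k\<in>{1..K}. \<forall>j\<in>{1..J}. (\<Sum>j2=1..J. p k j j2) = (\<Sum>j1=1..J. p k j1 j)"
      unfolding p_def using marg1[OF x1s x1s ly0] marg2[OF x1s x1s ly0] by simp
    moreover have "event_prob K W x1
             (\<lambda>y. \<exists>x2\<in>C - {x1}. \<forall>k\<in>{1..K}. \<forall>j1\<in>{1..J}. \<forall>j2\<in>{1..J}.
                    type3 y x1 x2 k j1 j2 = p k j1 j2) \<ge> 0"
      unfolding event_prob_def using fnn lx1 unfolding f_def by (intro sum_nonneg) auto
    ultimately have "is_joint_type n J K p
         \<and> (\<forall>k\<in>{1..K}. \<forall>j\<in>{1..J}. (\<Sum>j2=1..J. p k j j2) = (\<Sum>j1=1..J. p k j1 j))
         \<and> event_prob K W x1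
             (\<lambda>y. \<exists>x2\<in>C - {x1}. \<forall>k\<in>{1..K}. \<forall>j1\<in>{1..J}. \<forall>j2\<in>{1..J}.
                    type3 y x1 x2 k j1 j2 = p k j1 j2)
           \<ge> 1 / (2 * real (n + 1) ^ (J^2 * K - 1)) * b" using b0 by simp
    thus ?thesis using x1C unfolding b_def by blast
  next
    case False
    define x2 where "x2 y = (SOME x2. x2 \<in> C - {x1} \<and> y \<in> T x2)" for y
    have x2p: "x2 y \<in> C - {x1} \<and> y \<in> T (x2 y)" if "y \<in> cov x1" for y
    proof -
      have "\<exists>x2. x2 \<in> C - {x1} \<and> y \<in> T x2" using that unfolding cov_def by blast
      thus ?thesis unfolding x2_def by (rule someI_ex)
    qed
    define \<tau> where "\<tau> y = (\<lambda>k j1 j2. type3 y x1 (x2 y) k j1 j2)" for y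
    define P where "P = \<tau> ` cov x1"
    define g where "g p = sum f {y \<in> cov x1. \<tau> y = p}" for p
    have fincov: "finite (cov x1)" using finite_subset[OF covT finT[OF x1C]] .
    have finP: "finite P" unfolding P_def using fincov by simp
    have Pne: "P \<noteq> {}" unfolding P_def using False by simp
    have gsum: "sum g P = sum f (cov x1)" unfolding g_def P_def
      using sum.image_gen[OF fincov, of f \<tau>, symmetric] by simp
    have cP: "real (card P) > 0" using finP Pne by (simp add: card_gt_0_iff)
    have "\<exists>p\<in>P. g p * real (card P) \<ge> sum f (cov x1)"
    proof (rule ccontr)
      assume r: "\<not> (\<exists>p\<in>P. g p * real (card P) \<ge> sum f (cov x1))"
      have "\<forall>p\<in>P. g p < sum f (cov x1) / real (card P)"
      proof
        fix p assume "p \<in> P"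
        hence "g p * real (card P) < sum f (cov x1)" using r by force
        thus "g p < sum f (cov x1) / real (card P)" using cP by (simp add: pos_less_divide_eq)
      qed
      hence "sum g P < (\<Sum>p\<in>P. sum f (cov x1) / real (card P))"
        using finP Pne by (intro sum_strict_mono) auto
      also have "\<dots> = sum f (cov x1)" using finP Pne by simp
      finally show False using gsum by simp
    qed
    then obtain p where pP: "p \<in> P" and pg: "g p * real (card P) \<ge> sum f (cov x1)" by blast
    define B where "B = {1..K} \<times> {1..J} \<times> {1..J}"
    define cnt where "cnt y = (\<lambda>v. card {i \<in> {..<n}. (y!i, x1!i, x2 y!i) = v})" for y
    define D where "D = {c :: nat \<times> nat \<times> nat \<Rightarrow> nat. (\<forall>v. v \<notin> B \<longrightarrow> c v = 0) \<and> sum c B = n}"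
    define F where "F c = (\<lambda>k j1 j2. real (c (k, j1, j2)) / real n)" for c :: "nat \<times> nat \<times> nat \<Rightarrow> nat"
    have finB: "finite B" unfolding B_def by simp
    have cardB: "card B = J^2 * K" unfolding B_def by (simp add: power2_eq_square)
    have b0B: "(1,1,1) \<in> B" unfolding B_def using J K by auto
    have cb: "card D \<le> N \<and> finite D" unfolding D_def N_def cardB[symmetric] by (rule count_bound[OF finB b0B])
    have mapB: "(y!i, x1!i, x2 y!i) \<in> B" if "y \<in> cov x1" "i < n" for y i
    proof -
      have "y \<in> seqs n {1..K}" "x2 y \<in> seqs n {1..J}"
        using that(1) covT Tsub[OF x1C] x2p Cs by blast+
      hence "length y = n" "set y \<subseteq> {1..K}" "length (x2 y) = n" "set (x2 y) \<subseteq> {1..J}"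
        unfolding seqs_def by auto
      moreover have "length x1 = n" "set x1 \<subseteq> {1..J}" using x1s unfolding seqs_def by auto
      ultimately have "y!i \<in> {1..K}" "x1!i \<in> {1..J}" "x2 y!i \<in> {1..J}"
        using that(2) nth_mem by (metis subsetD)+
      thus ?thesis unfolding B_def by simp
    qed
    have cntD: "cnt y \<in> D" if "y \<in> cov x1" for y
    proof -
      have "cnt y v = 0" if "v \<notin> B" for v
        using mapB[OF \<open>y \<in> cov x1\<close>] that unfolding cnt_def by auto
      moreover have "sum (cnt y) B = n"
        unfolding cnt_def using card_split[of "{..<n}" "\<lambda>i. (y!i, x1!i, x2 y!i)" B] mapB[OF that] finB
        by auto
      ultimately show ?thesis unfolding D_def by blast
    qed
    have tauF: "\<tau> y = F (cnt y)" if "y \<in> cov x1" for y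
    proof -
      have ly: "length y = n" using that covT Tsub[OF x1C] unfolding seqs_def by blast
      have "{i. i < length y \<and> y ! i = k \<and> x1 ! i = j1 \<and> x2 y ! i = j2} = {i \<in> {..<n}. (y!i, x1!i, x2 y!i) = (k, j1, j2)}"
        for k j1 j2 using ly by auto
      thus ?thesis unfolding \<tau>_def F_def cnt_def type3_def by (simp add: ly)
    qed
    have "P = F ` cnt ` cov x1" unfolding P_def using tauF by (auto simp: image_image)
    hence "card P \<le> card (cnt ` cov x1)" using card_image_le[OF finite_imageI[OF fincov, of cnt], of F] by simp
    also have "\<dots> \<le> card D" using cntD cb by (intro card_mono) auto
    also have "\<dots> \<le> N" using cb by simp
    finally have cPN: "card P \<le> N" .
    obtain y1 where y1: "y1 \<in> cov x1" and py1: "p = \<tau> y1" using pP unfolding P_def by auto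
    have y1s: "y1 \<in> seqs n {1..K}" using y1 covT Tsub[OF x1C] by blast
    have ly1: "length y1 = n" using y1s unfolding seqs_def by simp
    have x2C: "x2 y1 \<in> C" and y1T2: "y1 \<in> T (x2 y1)" and y1T1: "y1 \<in> T x1"
      using x2p[OF y1] y1 covT by auto
    have x2s: "x2 y1 \<in> seqs n {1..J}" using Cs x2C by blast
    have jt: "is_joint_type n J K p" unfolding is_joint_type_def py1 \<tau>_def using y1s x1s x2s by blast
    have mg: "\<forall>k\<in>{1..K}. \<forall>j\<in>{1..J}. (\<Sum>j2=1..J. p k j j2) = (\<Sum>j1=1..J. p k j1 j)"
    proof (intro ballI)
      fix k j assume k: "k \<in> {1..K}" and j: "j \<in> {1..J}"
      have c1: "condtype K y1 x1 k j = pYX1 k j" using y1T1 k j unfolding T_def cond_typeclass_of_def by auto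
      have c2: "condtype K y1 (x2 y1) k j = pYX1 k j" using y1T2 k j unfolding T_def cond_typeclass_of_def by auto
      have "type2 x1 y1 j k = type2 (x2 y1) y1 j k"
        using type2_of_cond[OF _ c1] type2_of_cond[OF _ c2] ly1 lx1 Clen[OF x2C] C_type x1C x2C j by simp
      thus "(\<Sum>j2=1..J. p k j j2) = (\<Sum>j1=1..J. p k j1 j)"
        unfolding py1 \<tau>_def using marg1[OF x1s x2s ly1] marg2[OF x1s x2s ly1] by simp
    qed
    let ?E = "\<lambda>y. \<exists>x2\<in>C - {x1}. \<forall>k\<in>{1..K}. \<forall>j1\<in>{1..J}. \<forall>j2\<in>{1..J}. type3 y x1 x2 k j1 j2 = p k j1 j2"
    have "g p \<le> event_prob K W x1 ?E"
    proof -
      have "{y \<in> cov x1. \<tau> y = p} \<subseteq> {y \<in> seqs (length x1) {1..K}. ?E y}"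
      proof
        fix y assume y: "y \<in> {y \<in> cov x1. \<tau> y = p}"
        have "y \<in> seqs n {1..K}" using y covT Tsub[OF x1C] by blast
        moreover have "x2 y \<in> C - {x1}" using x2p y by blast
        moreover have "type3 y x1 (x2 y) k j1 j2 = p k j1 j2" for k j1 j2
          using y unfolding \<tau>_def by auto
        ultimately show "y \<in> {y \<in> seqs (length x1) {1..K}. ?E y}" using lx1 by blast
      qed
      moreover have "finite {y \<in> seqs (length x1) {1..K}. ?E y}" using finS lx1 by simp
      ultimately show ?thesis unfolding g_def event_prob_def f_def
        using fnn lx1 unfolding f_def by (intro sum_mono2) auto
    qed
    moreover have "g p \<ge> b / (2 * real N)"
    proof -
      have gnn: "g p \<ge> 0" unfolding g_def using fnn covT Tsub[OF x1C] by (intro sum_nonneg) blast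
      have "g p * real N \<ge> g p * real (card P)" using cPN gnn by (simp add: mult_left_mono)
      hence "g p * real N \<ge> b / 2" using pg cov2 by linarith
      thus ?thesis using Npos by (simp add: field_simps)
    qed
    ultimately have "event_prob K W x1 ?E \<ge> 1 / (2 * real (n + 1) ^ (J^2 * K - 1)) * b"
      unfolding Nreal by simp
    thus ?thesis using x1C jt mg unfolding b_def by blast
  qed
qed
end
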